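(* Let $(A,\vee,\perp,0)$ be a quasi-orthomodular nearsemilattice. Then for every $p \in A$ the initial segment $[0,p] = \{x \in A : x \le p\}$ is an orthomodular lattice (with the induced order), and the joins and meets in $[0,p]$ agree with the corresponding joins and meets existing in $A$.
   Context: A nearsemilattice is a poset $A$ with least element $0$ in which any two elements having a common upper bound have a join; $x \vee y$ is the (partial) join, and we say $x \vee y$ is defined iff $x,y$ have a common upper bound. An orthogonality on a poset with least element $0$ is a binary relation $\perp$ such that: (i) $x \perp y$ implies $y \perp x$; (ii) $x \le y$ and $y \perp z$ imply $x \perp z$; (iii) $x \perp 0$ for all $x$. A quasi-orthomodular nearsemilattice is a nearsemilattice with an orthogonality $\perp$ such that: (a) if $x \perp y$ then $x \vee y$ is defined; (b) if $x \le y$ then $y = x \vee z$ for some $z$ with $x \perp z$; (c) if $x \perp y$, $x \perp z$ and $y \le x \vee z$, then $y \le z$. An orthomodular lattice is a bounded lattice with an orthocomplementation $x \mapsto x^-$ (an order-reversing involution with $x \vee x^- = 1$) such that, for the orthogonality $x \perp y$ iff $y \le x^-$, whenever $x \le y$ there is $z$ with $x \perp z$ and $y = x \vee z$. *)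

theory Defs
  imports Main
begin

text \<open>The poset A is a type of class order_bot; its least element 0 is bot.
  Joins and meets are taken relative to a subset S with the induced order.\<close>

definition is_join_in :: "'a::order set \<Rightarrow> 'a \<Rightarrow> 'a \<Rightarrow> 'a \<Rightarrow> bool" where
  "is_join_in S x y j \<longleftrightarrow> j \<in> S \<and> x \<le> j \<and> y \<le> j \<and>
     (\<forall>u\<in>S. x \<le> u \<and> y \<le> u \<longrightarrow> j \<le> u)"

definition is_meet_in :: "'a::order set \<Rightarrow> 'a \<Rightarrow> 'a \<Rightarrow> 'a \<Rightarrow> bool" where
  "is_meet_in S x y m \<longleftrightarrow> m \<in> S \<and> m \<le> x \<and> m \<le> y \<and>
     (\<forall>l\<in>S. l \<le> x \<and> l \<le> y \<longrightarrow> l \<le> m)"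

definition nearsemilattice :: "'a::order_bot itself \<Rightarrow> bool" where
  "nearsemilattice _ \<longleftrightarrow>
     (\<forall>x y :: 'a. (\<exists>u. x \<le> u \<and> y \<le> u) \<longrightarrow> (\<exists>j. is_join_in UNIV x y j))"

definition orthogonality :: "('a::order_bot \<Rightarrow> 'a \<Rightarrow> bool) \<Rightarrow> bool" where
  "orthogonality orth \<longleftrightarrow>
     (\<forall>x y. orth x y \<longrightarrow> orth y x) \<and>
     (\<forall>x y z. x \<le> y \<and> orth y z \<longrightarrow> orth x z) \<and>
     (\<forall>x. orth x bot)"

definition quasi_orthomodular_nearsemilattice :: "('a::order_bot \<Rightarrow> 'a \<Rightarrow> bool) \<Rightarrow> bool" where
  "quasi_orthomodular_nearsemilattice orth \<longleftrightarrow>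
     nearsemilattice TYPE('a) \<and> orthogonality orth \<and>
     (\<forall>x y. orth x y \<longrightarrow> (\<exists>j. is_join_in UNIV x y j)) \<and>
     (\<forall>x y. x \<le> y \<longrightarrow> (\<exists>z. orth x z \<and> is_join_in UNIV x z y)) \<and>
     (\<forall>x y z. orth x y \<and> orth x z \<and> (\<exists>j. is_join_in UNIV x z j \<and> y \<le> j) \<longrightarrow> y \<le> z)"

definition orthocomplementation_on :: "'a::order set \<Rightarrow> ('a \<Rightarrow> 'a) \<Rightarrow> 'a \<Rightarrow> bool" where
  "orthocomplementation_on S c one \<longleftrightarrow>
     (\<forall>x\<in>S. c x \<in> S) \<and>
     (\<forall>x\<in>S. \<forall>y\<in>S. x \<le> y \<longrightarrow> c y \<le> c x) \<and>
     (\<forall>x\<in>S. c (c x) = x) \<and>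
     (\<forall>x\<in>S. is_join_in S x (c x) one)"

text \<open>S with the induced order is an orthomodular lattice: a bounded lattice with an
  orthocomplementation c such that, for x orth z iff z <= c x, whenever x <= y there is
  z with x orth z and y = x join z.\<close>
definition orthomodular_lattice_on :: "'a::order set \<Rightarrow> bool" where
  "orthomodular_lattice_on S \<longleftrightarrow>
     (\<exists>zero one c. zero \<in> S \<and> one \<in> S \<and> (\<forall>x\<in>S. zero \<le> x \<and> x \<le> one) \<and>
        (\<forall>x\<in>S. \<forall>y\<in>S. (\<exists>j. is_join_in S x y j) \<and> (\<exists>m. is_meet_in S x y m)) \<and>
        orthocomplementation_on S c one \<and>
        (\<forall>x\<in>S. \<forall>y\<in>S. x \<le> y \<longrightarrow> (\<exists>z\<in>S. z \<le> c x \<and> is_join_in S x z y)))"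

end

theory Submission
  imports Defs
begin

lemma join_comm: "is_join_in S x y j \<longleftrightarrow> is_join_in S y x j"
  unfolding is_join_in_def by auto

theorem theorem2:
  fixes orth :: "'a::order_bot \<Rightarrow> 'a \<Rightarrow> bool" and p :: 'a
  assumes "quasi_orthomodular_nearsemilattice orth"
  shows "orthomodular_lattice_on {x. x \<le> p} \<and>
    (\<forall>x y. x \<le> p \<longrightarrow> y \<le> p \<longrightarrow>
       (\<forall>j. is_join_in {x. x \<le> p} x y j \<longleftrightarrow> is_join_in UNIV x y j) \<and>
       (\<forall>m. is_meet_in {x. x \<le> p} x y m \<longleftrightarrow> is_meet_in UNIV x y m))"
proof -
  let ?S = "{x. x \<le> p}"
  have ns: "\<And>x y u :: 'a. x \<le> u \<Longrightarrow> y \<le> u \<Longrightarrow> \<exists>j. is_join_in UNIV x y j"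
  proof -
    fix x y u :: 'a assume "x \<le> u" "y \<le> u"
    moreover have "\<forall>x y :: 'a. (\<exists>u. x \<le> u \<and> y \<le> u) \<longrightarrow> (\<exists>j. is_join_in UNIV x y j)"
      using assms unfolding quasi_orthomodular_nearsemilattice_def nearsemilattice_def by simp
    ultimately show "\<exists>j. is_join_in UNIV x y j" by blast
  qed
  have og: "orthogonality orth"
    using assms unfolding quasi_orthomodular_nearsemilattice_def by (elim conjE) assumption
  have Bx: "\<forall>x y. x \<le> y \<longrightarrow> (\<exists>z. orth x z \<and> is_join_in UNIV x z y)"
    using assms unfolding quasi_orthomodular_nearsemilattice_def by (elim conjE) assumption
  have Cx: "\<forall>x y z. orth x y \<and> orth x z \<and> (\<exists>j. is_join_in UNIV x z j \<and> y \<le> j) \<longrightarrow> y \<le> z"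
    using assms unfolding quasi_orthomodular_nearsemilattice_def by (elim conjE) assumption
  have Sx: "\<forall>x y. orth x y \<longrightarrow> orth y x"
    using og unfolding orthogonality_def by (elim conjE) assumption
  have Dx: "\<forall>x y z. x \<le> y \<and> orth y z \<longrightarrow> orth x z"
    using og unfolding orthogonality_def by (elim conjE) assumption
  have sym: "orth y x" if "orth x y" for x y
    using Sx that by simp
  have down: "orth x z" if "x \<le> y" "orth y z" for x y z
    by (rule Dx[rule_format, of x y z]) (simp add: that)
  have b: "\<exists>z. orth x z \<and> is_join_in UNIV x z y" if "x \<le> y" for x y
    using Bx that by simp
  have c: "y \<le> z" if "orth x y" "orth x z" "is_join_in UNIV x z j" "y \<le> j" for x y z j
    by (rule Cx[rule_format, of x y z]) (use that in blast)
  have joinS: "is_join_in ?S x y j \<longleftrightarrow> is_join_in UNIV x y j" if xp: "x \<le> p" and yp: "y \<le> p" for x y j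
  proof
    assume h: "is_join_in ?S x y j"
    obtain j' where j': "is_join_in UNIV x y j'" using ns[OF xp yp] by blast
    have "j' \<le> p" using j' xp yp by (simp add: is_join_in_def)
    then have "j \<le> j'" using h j' unfolding is_join_in_def by auto
    moreover have "j' \<le> j" using h j' unfolding is_join_in_def by auto
    ultimately have "j = j'" by simp
    then show "is_join_in UNIV x y j" using j' by simp
  next
    assume h: "is_join_in UNIV x y j"
    then have "j \<le> p" using xp yp unfolding is_join_in_def by auto
    then show "is_join_in ?S x y j" using h unfolding is_join_in_def by auto
  qed
  have meetS: "is_meet_in ?S x y m \<longleftrightarrow> is_meet_in UNIV x y m" if "x \<le> p" for x y m
  proof -
    have "\<And>l. l \<le> x \<Longrightarrow> l \<in> ?S" using that by (auto intro: order_trans)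
    then show ?thesis unfolding is_meet_in_def by blast
  qed
  define cc where "cc x = (THE z. orth x z \<and> is_join_in UNIV x z p)" for x
  have cuniq0: "z' = z" if "orth x z \<and> is_join_in UNIV x z p" "orth x z' \<and> is_join_in UNIV x z' p" for x z z'
  proof -
    have "z' \<le> p" "z \<le> p" using that unfolding is_join_in_def by simp_all
    then have "z' \<le> z" "z \<le> z'" using c[of x z' z p] c[of x z z' p] that by simp_all
    then show ?thesis by simp
  qed
  have cprop: "orth x (cc x) \<and> is_join_in UNIV x (cc x) p" if xp: "x \<le> p" for x
  proof -
    obtain z where z: "orth x z \<and> is_join_in UNIV x z p" using b[OF xp] by blast
    have "cc x = z" unfolding cc_def
    proof (rule the_equality)
      show "orth x z \<and> is_join_in UNIV x z p" by (rule z)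
      fix w assume "orth x w \<and> is_join_in UNIV x w p"
      then show "w = z" by (rule cuniq0[OF z])
    qed
    then show ?thesis using z by simp
  qed
  have cuniq: "z = cc x" if "x \<le> p" "orth x z" "is_join_in UNIV x z p" for x z
    using cuniq0[OF cprop[OF that(1)], of z] that by simp
  have cle: "cc x \<le> p" if "x \<le> p" for x
    using cprop[OF that] unfolding is_join_in_def by simp
  have key: "orth x y \<longleftrightarrow> y \<le> cc x" if "x \<le> p" "y \<le> p" for x y
  proof
    assume "orth x y"
    then show "y \<le> cc x" using c[of x y "cc x" p] cprop[OF that(1)] that(2) by blast
  next
    assume "y \<le> cc x"
    then show "orth x y" using down[of y "cc x" x] sym cprop[OF that(1)] by blast
  qed
  have ccc: "cc (cc x) = x" if "x \<le> p" for x
  proof -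
    have "x = cc (cc x)"
      apply (rule cuniq[OF cle[OF that]])
      using cprop[OF that] sym apply blast
      using cprop[OF that] join_comm apply blast
      done
    then show ?thesis by simp
  qed
  have anti: "cc y \<le> cc x" if "x \<le> y" "y \<le> p" for x y
  proof -
    have "orth x (cc y)" using down[of x y "cc y"] that cprop[OF that(2)] by blast
    then show ?thesis using key[of x "cc y"] that cle[OF that(2)] by (meson order_trans)
  qed
  have meetex: "\<exists>m. is_meet_in ?S x y m" if xp: "x \<le> p" and yp: "y \<le> p" for x y
  proof -
    obtain j where j: "is_join_in UNIV (cc x) (cc y) j" using ns[OF cle[OF xp] cle[OF yp]] by blast
    have jp: "j \<le> p" using j cle xp yp unfolding is_join_in_def by auto
    have "is_meet_in ?S x y (cc j)"
      unfolding is_meet_in_def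
    proof (intro conjI ballI impI)
      show "cc j \<in> ?S" using cle[OF jp] by simp
      show "cc j \<le> x" using anti[of "cc x" j] j jp ccc[OF xp] unfolding is_join_in_def by auto
      show "cc j \<le> y" using anti[of "cc y" j] j jp ccc[OF yp] unfolding is_join_in_def by auto
    next
      fix l assume l: "l \<in> ?S" "l \<le> x \<and> l \<le> y"
      have "cc x \<le> cc l" using anti[of l x] l xp yp by simp
      moreover have "cc y \<le> cc l" using anti[of l y] l xp yp by simp
      ultimately have "j \<le> cc l" using j unfolding is_join_in_def by auto
      moreover have "cc l \<le> p" using cle l by simp
      ultimately have "cc (cc l) \<le> cc j" by (rule anti)
      then show "l \<le> cc j" using ccc l by simp
    qed
    then show ?thesis by blast
  qed
  have oc: "orthocomplementation_on ?S cc p"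
    unfolding orthocomplementation_on_def
  proof (intro conjI ballI impI)
    fix x assume x: "x \<in> ?S"
    show "cc x \<in> ?S" using cle x by simp
    show "cc (cc x) = x" using ccc x by simp
    have "is_join_in UNIV x (cc x) p" using cprop x by simp
    then show "is_join_in ?S x (cc x) p" using joinS[of x "cc x" p] x cle by simp
  next
    fix x y assume "x \<in> ?S" "y \<in> ?S" "x \<le> y"
    then show "cc y \<le> cc x" using anti by simp
  qed
  have om1: "\<forall>x\<in>?S. \<forall>y\<in>?S. (\<exists>j. is_join_in ?S x y j) \<and> (\<exists>m. is_meet_in ?S x y m)"
  proof (intro ballI conjI)
    fix x y assume xs: "x \<in> ?S" and ys: "y \<in> ?S"
    then obtain j where "is_join_in UNIV x y j" using ns[of x p y] by auto
    then show "\<exists>j. is_join_in ?S x y j" using joinS[of x y j] xs ys by auto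
    show "\<exists>m. is_meet_in ?S x y m" using meetex xs ys by auto
  qed
  have om2: "\<forall>x\<in>?S. \<forall>y\<in>?S. x \<le> y \<longrightarrow> (\<exists>z\<in>?S. z \<le> cc x \<and> is_join_in ?S x z y)"
  proof (intro ballI impI)
    fix x y assume xy: "x \<in> ?S" "y \<in> ?S" "x \<le> y"
    obtain z where z: "orth x z" "is_join_in UNIV x z y" using b[OF xy(3)] by blast
    have zy: "z \<le> y" using z unfolding is_join_in_def by simp
    with xy have zp: "z \<le> p" by auto
    show "\<exists>z\<in>?S. z \<le> cc x \<and> is_join_in ?S x z y"
    proof (intro bexI conjI)
      show "z \<in> ?S" using zp by simp
      show "z \<le> cc x" using key[of x z] xy zp z by simp
      show "is_join_in ?S x z y" using joinS[of x z y] xy zp z by simp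
    qed
  qed
  have om0: "bot \<in> ?S" "p \<in> ?S" "\<forall>x\<in>?S. bot \<le> x \<and> x \<le> p" by auto
  have om: "orthomodular_lattice_on ?S"
    unfolding orthomodular_lattice_on_def
    using om0 om1 om2 oc by blast
  show ?thesis
  proof (intro conjI allI impI)
    show "orthomodular_lattice_on ?S" by (rule om)
  next
    fix x y j assume "x \<le> p" "y \<le> p"
    then show "is_join_in ?S x y j \<longleftrightarrow> is_join_in UNIV x y j" by (rule joinS)
  next
    fix x y m assume "x \<le> p" "y \<le> p"
    then show "is_meet_in ?S x y m \<longleftrightarrow> is_meet_in UNIV x y m" using meetS by blast
  qed
qed

end
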